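(* Let $\mathcal H$ be a complex Hilbert space, $\Omega$ a set, $\mathcal A$ an algebra of subsets of $\Omega$, $\Sigma$ the σ-algebra generated by $\mathcal A$, and $\{p_A:A\in\mathcal A\}$ a projection valued measure on $\mathcal A$. Then there exists a projection valued measure $\{p_A:A\in\mathcal M\}$ extending it to $\mathcal M$. For every $\phi\in\mathcal H$ and $A\in\mathcal M$, $\|p_A\phi\|^2=M_\phi(A)$. For $A\in\mathcal M$ the range of $p_A$ is $\mathcal H_A=\{\phi\in\mathcal H:M_\phi(A)=\|\phi\|^2\}$, and $$\mathcal H_A=\bigcap\{\mathcal H_B:B\in\mathcal A_\sigma,\ A\subset B\}.$$ Furthermore, $\{p_A:A\in\Sigma\}$ is the unique projection valued measure on $\Sigma$ extending $\{p_A:A\in\mathcal A\}$.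
   Context: A projection is a bounded self-adjoint idempotent operator on $\mathcal H$. A family $\{p_A:A\in\mathcal C\}$ of projections indexed by an algebra (or σ-algebra) $\mathcal C$ of subsets of $\Omega$ is a projection valued measure if $p_\Omega=I$ and, whenever $A_1,A_2,\dots\in\mathcal C$ are disjoint with $A=\bigcup_iA_i\in\mathcal C$, $p_A=\sum_ip_{A_i}$ (meaning $p_A\phi=\sum_ip_{A_i}\phi$ for every $\phi$). For $\phi\in\mathcal H$ and $A\in\mathcal A$ put $M_\phi(A)=\|p_A\phi\|^2$; for arbitrary $A\subset\Omega$ let $M^*_\phi(A)=\inf\{\sum_{i\ge1}M_\phi(A_i):A\subset\bigcup_iA_i,\ A_i\in\mathcal A\}$ be the outer measure, $\mathcal M_\phi$ the σ-algebra of $M^*_\phi$-measurable sets (in Carathéodory's sense), and $M_\phi(A)=M^*_\phi(A)$ for $A\in\mathcal M_\phi$. Let $\mathcal M=\bigcap_{\phi\in\mathcal H}\mathcal M_\phi$, a σ-algebra with $\mathcal A\subset\Sigma\subset\mathcal M$. $\mathcal A_\sigma$ denotes the family of countable unions of sets in $\mathcal A$. For $A\in\mathcal A$, $\mathcal H_A$ denotes the range of $p_A$. *)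

theory Defs
  imports "HOL-Analysis.Analysis"
begin

text \<open>A complex Hilbert space is modelled as a real Hilbert space (type class
  real_inner + complete_space; the real inner product is the real part of the
  complex one) together with a complex structure J (multiplication by the
  imaginary unit): J is real-linear, J (J x) = - x and J is isometric for the
  inner product.  Complex scalar multiplication is (a + i b) x = a x + b J x.\<close>

definition complex_structure :: "('a::real_inner \<Rightarrow> 'a) \<Rightarrow> bool" where
  "complex_structure J \<longleftrightarrow> linear J \<and> (\<forall>x. J (J x) = - x) \<and> (\<forall>x y. inner (J x) (J y) = inner x y)"

text \<open>The complex inner product induced by J (linear in the first argument).\<close>
definition cinner :: "('a::real_inner \<Rightarrow> 'a) \<Rightarrow> 'a \<Rightarrow> 'a \<Rightarrow> complex" where
  "cinner J x y = Complex (inner x y) (inner x (J y))"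

definition bounded_clinear_op :: "('a::real_normed_vector \<Rightarrow> 'a) \<Rightarrow> ('a \<Rightarrow> 'a) \<Rightarrow> bool" where
  "bounded_clinear_op J p \<longleftrightarrow> bounded_linear p \<and> (\<forall>x. p (J x) = J (p x))"

definition is_projection :: "('a::real_inner \<Rightarrow> 'a) \<Rightarrow> ('a \<Rightarrow> 'a) \<Rightarrow> bool" where
  "is_projection J p \<longleftrightarrow> bounded_clinear_op J p \<and> p \<circ> p = p
      \<and> (\<forall>x y. cinner J (p x) y = cinner J x (p y))"

definition is_pvm :: "('a::real_inner \<Rightarrow> 'a) \<Rightarrow> 'b set \<Rightarrow> 'b set set \<Rightarrow> ('b set \<Rightarrow> 'a \<Rightarrow> 'a) \<Rightarrow> bool" where
  "is_pvm J \<Omega> C p \<longleftrightarrow> (\<forall>A\<in>C. is_projection J (p A)) \<and> p \<Omega> = id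
     \<and> (\<forall>F::nat \<Rightarrow> 'b set. range F \<subseteq> C \<longrightarrow> disjoint_family F \<longrightarrow> (\<Union>i. F i) \<in> C \<longrightarrow>
           (\<forall>\<phi>. (\<lambda>i. p (F i) \<phi>) sums p (\<Union>i. F i) \<phi>))"

definition Mstar :: "'b set set \<Rightarrow> ('b set \<Rightarrow> 'a::real_normed_vector \<Rightarrow> 'a) \<Rightarrow> 'a \<Rightarrow> 'b set \<Rightarrow> ennreal" where
  "Mstar \<A> p \<phi> S = (INF F\<in>{F::nat \<Rightarrow> 'b set. range F \<subseteq> \<A> \<and> S \<subseteq> (\<Union>i. F i)}.
                        \<Sum>i. ennreal ((norm (p (F i) \<phi>))\<^sup>2))"

definition Mphi_sets :: "'b set \<Rightarrow> 'b set set \<Rightarrow> ('b set \<Rightarrow> 'a::real_normed_vector \<Rightarrow> 'a) \<Rightarrow> 'a \<Rightarrow> 'b set set" where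
  "Mphi_sets \<Omega> \<A> p \<phi> = lambda_system \<Omega> (Pow \<Omega>) (Mstar \<A> p \<phi>)"

definition Msets :: "'b set \<Rightarrow> 'b set set \<Rightarrow> ('b set \<Rightarrow> 'a::real_normed_vector \<Rightarrow> 'a) \<Rightarrow> 'b set set" where
  "Msets \<Omega> \<A> p = {S. \<forall>\<phi>. S \<in> Mphi_sets \<Omega> \<A> p \<phi>}"

definition sigma_unions :: "'b set set \<Rightarrow> 'b set set" where
  "sigma_unions \<A> = {(\<Union>i. F i) | F::nat \<Rightarrow> 'b set. range F \<subseteq> \<A>}"

end

theory Submission
  imports Defs
begin

lemma cs_inner_J: assumes "complex_structure J" shows "inner (J x) y = - inner x (J y)"
proof -
  have "inner (J x) y = inner (J (J x)) (J y)" using assms unfolding complex_structure_def by metis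
  also have "\<dots> = - inner x (J y)" using assms unfolding complex_structure_def by simp
  finally show ?thesis .
qed

lemma cs_norm: assumes "complex_structure J" shows "norm (J x) = norm x"
  using assms unfolding complex_structure_def by (simp add: norm_eq_sqrt_inner)

lemma cs_bl: assumes "complex_structure J" shows "bounded_linear J"
proof -
  have "linear J" using assms unfolding complex_structure_def by simp
  then interpret linear J .
  show ?thesis by unfold_locales (rule exI[of _ 1], simp add: cs_norm[OF assms])
qed

lemma sym_zero:
  fixes T :: "'a::real_inner \<Rightarrow> 'a"
  assumes "linear T" "\<And>x y. inner (T x) y = inner x (T y)" "\<And>x. inner (T x) x = 0"
  shows "T x = 0"
proof -
  interpret linear T by fact
  have "inner (T (x + T x)) (x + T x) = 0" by (rule assms(3))
  hence "inner (T x) x + inner (T x) (T x) + inner (T (T x)) x + inner (T (T x)) (T x) = 0"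
    by (simp add: add inner_add_left inner_add_right)
  moreover have "inner (T (T x)) x = inner (T x) (T x)" using assms(2) by (simp add: inner_commute)
  ultimately have "inner (T x) (T x) = 0" using assms(3)[of x] assms(3)[of "T x"] by simp
  thus ?thesis by simp
qed

lemma proj_sym: "is_projection J P \<Longrightarrow> inner (P x) y = inner x (P y)"
  unfolding is_projection_def cinner_def by (metis complex.inject)

lemma proj_idem: "is_projection J P \<Longrightarrow> P (P x) = P x"
  unfolding is_projection_def by (metis comp_apply)

lemma proj_bl: "is_projection J P \<Longrightarrow> bounded_linear P"
  unfolding is_projection_def bounded_clinear_op_def by simp

lemma proj_lin: "is_projection J P \<Longrightarrow> linear P"
  using proj_bl bounded_linear.linear by blast

lemma proj_J: "is_projection J P \<Longrightarrow> P (J x) = J (P x)"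
  unfolding is_projection_def bounded_clinear_op_def by simp

lemma proj_inner_self: "is_projection J P \<Longrightarrow> inner (P x) x = (norm (P x))\<^sup>2"
  by (metis power2_norm_eq_inner proj_idem proj_sym)

lemma proj_norm_le: assumes "is_projection J P" shows "norm (P x) \<le> norm x"
proof -
  have "(norm (P x))\<^sup>2 \<le> norm (P x) * norm x"
    using proj_inner_self[OF assms, of x] Cauchy_Schwarz_ineq2[of "P x" x] by simp
  thus ?thesis by (metis norm_ge_zero power2_eq_square mult_le_cancel_left_pos order.refl
      antisym_conv2 mult_right_mono not_le)
qed

lemma proj_compl_norm: assumes "is_projection J P"
  shows "(norm (x - P x))\<^sup>2 = (norm x)\<^sup>2 - (norm (P x))\<^sup>2"
proof -
  have "(norm (x - P x))\<^sup>2 = inner x x - 2 * inner (P x) x + inner (P x) (P x)"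
    by (simp add: power2_norm_eq_inner inner_diff_left inner_diff_right inner_commute)
  thus ?thesis using proj_inner_self[OF assms, of x] by (simp add: power2_norm_eq_inner)
qed

lemma proj_fix_iff: assumes "is_projection J P"
  shows "P x = x \<longleftrightarrow> norm (P x) = norm x"
proof
  assume "norm (P x) = norm x"
  hence "(norm (x - P x))\<^sup>2 = 0" using proj_compl_norm[OF assms] by simp
  thus "P x = x" by simp
qed simp

lemma proj_intro:
  fixes P :: "'a::real_inner \<Rightarrow> 'a"
  assumes "linear P" "\<And>x y. inner (P x) y = inner x (P y)" "\<And>x. P (J x) = J (P x)"
    "\<And>x. inner (P x) x = inner (P x) (P x)"
  shows "is_projection J P"
proof -
  interpret linear P by fact
  have nb: "norm (P x) \<le> norm x" for x
  proof -
    have "(norm (P x))\<^sup>2 \<le> norm (P x) * norm x"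
      using assms(4)[of x] Cauchy_Schwarz_ineq2[of "P x" x] by (simp add: power2_norm_eq_inner)
    thus ?thesis by (metis norm_ge_zero power2_eq_square mult_le_cancel_left_pos order.refl
      antisym_conv2 mult_right_mono not_le)
  qed
  have bl: "bounded_linear P" by unfold_locales (rule exI[of _ 1], simp add: nb)
  have lin2: "linear (\<lambda>x. P (P x) - P x)"
    using assms(1) by (intro linear_compose_sub linear_compose[unfolded o_def, of P P]) auto
  have "P (P x) - P x = 0" for x
  proof (rule sym_zero[OF lin2])
    show "inner (P (P x) - P x) y = inner x (P (P y) - P y)" for x y
      using assms(2) by (simp add: inner_diff_left inner_diff_right)
    show "inner (P (P x) - P x) x = 0" for x
      using assms(2)[of "P x" x] assms(4)[of x] by (simp add: inner_diff_left inner_diff_right inner_commute)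
  qed
  hence idem: "P \<circ> P = P" by (auto simp: fun_eq_iff)
  show ?thesis unfolding is_projection_def bounded_clinear_op_def cinner_def
    using bl idem assms(2,3) by (simp add: assms(3)[symmetric])
qed

lemma proj_eqI:
  assumes "is_projection J P" "is_projection J Q" "\<And>x. norm (P x) = norm (Q x)"
  shows "P = Q"
proof -
  have lin: "linear (\<lambda>x. P x - Q x)" using proj_lin[OF assms(1)] proj_lin[OF assms(2)]
    by (rule linear_compose_sub)
  have "P x - Q x = 0" for x
  proof (rule sym_zero[OF lin])
    show "inner (P x - Q x) y = inner x (P y - Q y)" for x y
      using proj_sym[OF assms(1)] proj_sym[OF assms(2)] by (simp add: inner_diff_left inner_diff_right)
    show "inner (P x - Q x) x = 0" for x
      using proj_inner_self[OF assms(1)] proj_inner_self[OF assms(2)] assms(3)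
      by (simp add: inner_diff_left)
  qed
  thus ?thesis by auto
qed

lemma pvm_proj: "is_pvm J \<Omega> C p \<Longrightarrow> A \<in> C \<Longrightarrow> is_projection J (p A)"
  unfolding is_pvm_def by blast

lemma pvm_empty: assumes "is_pvm J \<Omega> C p" "{} \<in> C" shows "p {} x = 0"
proof -
  have "(\<lambda>i. p ((\<lambda>_::nat. {}) i) x) sums p (\<Union>i. (\<lambda>_::nat. {}) i) x"
    using assms unfolding is_pvm_def by (auto simp: disjoint_family_on_def)
  hence "(\<lambda>i::nat. p {} x) sums p {} x" by simp
  hence "(\<lambda>i::nat. p {} x) \<longlonglongrightarrow> 0" using summable_LIMSEQ_zero sums_summable by blast
  thus ?thesis by (simp add: LIMSEQ_const_iff)
qed

lemma pvm_add: assumes "is_pvm J \<Omega> C p" "algebra \<Omega> C" "A \<in> C" "B \<in> C" "A \<inter> B = {}"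
  shows "p (A \<union> B) x = p A x + p B x"
proof -
  interpret algebra \<Omega> C by fact
  define F where "F = (\<lambda>i::nat. if i = 0 then A else if i = 1 then B else {})"
  have U: "(\<Union>i. F i) = A \<union> B"
  proof
    show "(\<Union>i. F i) \<subseteq> A \<union> B" unfolding F_def by auto
    have "F 0 = A" "F 1 = B" unfolding F_def by auto
    thus "A \<union> B \<subseteq> (\<Union>i. F i)" by blast
  qed
  have r: "range F \<subseteq> C" using assms by (auto simp: F_def)
  have d: "disjoint_family F" using assms(5) by (auto simp: F_def disjoint_family_on_def)
  have "(\<Union>i. F i) \<in> C" using U assms(3,4) Un by simp
  hence s: "(\<lambda>i. p (F i) x) sums p (\<Union>i. F i) x"
    using assms(1) r d unfolding is_pvm_def by blast
  have "(\<lambda>i. p (F i) x) sums (\<Sum>i\<in>{0,1}. p (F i) x)"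
    by (rule sums_finite) (auto simp: F_def pvm_empty[OF assms(1)])
  hence "(\<lambda>i. p (F i) x) sums (p A x + p B x)" by (simp add: F_def)
  thus ?thesis using s U sums_unique2 by metis
qed

lemma pvm_orth: assumes "is_pvm J \<Omega> C p" "algebra \<Omega> C" "A \<in> C" "B \<in> C" "A \<inter> B = {}"
  shows "inner (p A x) (p B x) = 0"
proof -
  interpret algebra \<Omega> C by fact
  have pa: "is_projection J (p A)" and pb: "is_projection J (p B)"
    and pab: "is_projection J (p (A \<union> B))" using assms pvm_proj by blast+
  have e: "p (A \<union> B) x = p A x + p B x" by (rule pvm_add[OF assms])
  have "(norm (p (A \<union> B) x))\<^sup>2 = inner (p A x) x + inner (p B x) x"
    using proj_inner_self[OF pab, of x] e by (simp add: inner_add_left)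
  also have "\<dots> = (norm (p A x))\<^sup>2 + (norm (p B x))\<^sup>2"
    using proj_inner_self[OF pa] proj_inner_self[OF pb] by simp
  finally have 1: "(norm (p (A \<union> B) x))\<^sup>2 = (norm (p A x))\<^sup>2 + (norm (p B x))\<^sup>2" .
  have "(norm (p (A \<union> B) x))\<^sup>2 = (norm (p A x))\<^sup>2 + (norm (p B x))\<^sup>2 + 2 * inner (p A x) (p B x)"
    unfolding e by (simp add: power2_norm_eq_inner inner_add_left inner_add_right inner_commute)
  with 1 show ?thesis by simp
qed

lemma pvm_sums_norm: fixes F :: "nat \<Rightarrow> 'b set" assumes "is_pvm J \<Omega> C p" "algebra \<Omega> C" "range F \<subseteq> C" "disjoint_family F"
    "(\<Union>i. F i) \<in> C"
  shows "(\<lambda>i. (norm (p (F i) x))\<^sup>2) sums (norm (p (\<Union>i. F i) x))\<^sup>2"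
proof -
  interpret algebra \<Omega> C by fact
  have s: "(\<lambda>i. p (F i) x) sums p (\<Union>i. F i) x"
    using assms unfolding is_pvm_def by blast
  have eq: "(norm (\<Sum>i<n. p (F i) x))\<^sup>2 = (\<Sum>i<n. (norm (p (F i) x))\<^sup>2)" for n
  proof (rule norm_sum_Pythagorean)
    show "pairwise (\<lambda>i j. orthogonal (p (F i) x) (p (F j) x)) {..<n}"
      unfolding pairwise_def orthogonal_def
    proof (intro ballI impI)
      fix i j :: nat assume "i \<noteq> j"
      hence "F i \<inter> F j = {}" using assms(4) by (simp add: disjoint_family_on_def)
      moreover have "F i \<in> C" "F j \<in> C" using assms(3) by auto
      ultimately show "inner (p (F i) x) (p (F j) x) = 0" using pvm_orth[OF assms(1,2)] by blast
    qed
  qed simp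
  have "(\<lambda>n. (norm (\<Sum>i<n. p (F i) x))\<^sup>2) \<longlonglongrightarrow> (norm (p (\<Union>i. F i) x))\<^sup>2"
    using s unfolding sums_def by (intro tendsto_power tendsto_norm)
  thus ?thesis unfolding sums_def eq .
qed

lemma pvm_ca: assumes "is_pvm J \<Omega> C p" "algebra \<Omega> C"
  shows "countably_additive C (\<lambda>A. ennreal ((norm (p A x))\<^sup>2))"
  unfolding countably_additive_def
proof (intro allI impI)
  fix F :: "nat \<Rightarrow> _" assume "range F \<subseteq> C" "disjoint_family F" "(\<Union>i. F i) \<in> C"
  from pvm_sums_norm[OF assms this] have s: "(\<lambda>i. (norm (p (F i) x))\<^sup>2) sums (norm (p (\<Union>i. F i) x))\<^sup>2" .
  have "(\<Sum>i. ennreal ((norm (p (F i) x))\<^sup>2)) = ennreal (\<Sum>i. (norm (p (F i) x))\<^sup>2)"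
    by (rule suminf_ennreal2) (use s sums_summable in auto)
  also have "(\<Sum>i. (norm (p (F i) x))\<^sup>2) = (norm (p (\<Union>i. F i) x))\<^sup>2" using s sums_unique by metis
  finally show "(\<Sum>i. ennreal ((norm (p (F i) x))\<^sup>2)) = ennreal ((norm (p (\<Union>i. F i) x))\<^sup>2)" .
qed

lemma pvm_pos: assumes "is_pvm J \<Omega> C p" "algebra \<Omega> C"
  shows "positive C (\<lambda>A. ennreal ((norm (p A x))\<^sup>2))"
proof -
  have "{} \<in> C" using assms(2) by (simp add: algebra_iff_Un)
  hence "p {} x = 0" by (rule pvm_empty[OF assms(1)])
  thus ?thesis unfolding positive_def by simp
qed

locale pv =
  fixes J :: "'a::{real_inner, complete_space} \<Rightarrow> 'a"
    and \<Omega> :: "'b set" and \<A> :: "'b set set" and p :: "'b set \<Rightarrow> 'a \<Rightarrow> 'a"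
  assumes cs: "complex_structure J"
    and alg: "algebra \<Omega> \<A>"
    and pvm: "is_pvm J \<Omega> \<A> p"
begin

interpretation A: algebra \<Omega> \<A> by (rule alg)

definition mu :: "'a \<Rightarrow> 'b set \<Rightarrow> ennreal" where
  "mu \<phi> A = ennreal ((norm (p A \<phi>))\<^sup>2)"

abbreviation MS where "MS \<phi> \<equiv> Mstar \<A> p \<phi>"

lemma mu_pos: "positive \<A> (mu \<phi>)" unfolding mu_def by (rule pvm_pos[OF pvm alg])
lemma mu_ca: "countably_additive \<A> (mu \<phi>)" unfolding mu_def by (rule pvm_ca[OF pvm alg])
lemma mu_inc: "increasing \<A> (mu \<phi>)"
  by (metis A.additive_increasing A.countably_additive_additive mu_ca mu_pos)

lemma Mstar_eq: "MS \<phi> = outer_measure \<A> (mu \<phi>)"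
proof
  fix X
  show "MS \<phi> X = outer_measure \<A> (mu \<phi>) X"
    unfolding Mstar_def outer_measure_def mu_def[symmetric]
  proof (rule antisym)
    show "(INF F\<in>{F. range F \<subseteq> \<A> \<and> X \<subseteq> \<Union> (range F)}. \<Sum>i. mu \<phi> (F i))
      \<le> (INF A\<in>{A. range A \<subseteq> \<A> \<and> disjoint_family A \<and> X \<subseteq> \<Union> (range A)}. \<Sum>i. mu \<phi> (A i))"
      by (rule INF_superset_mono) auto
    show "(INF A\<in>{A. range A \<subseteq> \<A> \<and> disjoint_family A \<and> X \<subseteq> \<Union> (range A)}. \<Sum>i. mu \<phi> (A i))
      \<le> (INF F\<in>{F. range F \<subseteq> \<A> \<and> X \<subseteq> \<Union> (range F)}. \<Sum>i. mu \<phi> (F i))"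
    proof (rule INF_greatest)
      fix F :: "nat \<Rightarrow> 'b set" assume F: "F \<in> {F. range F \<subseteq> \<A> \<and> X \<subseteq> \<Union> (range F)}"
      have r: "range (disjointed F) \<subseteq> \<A>" using F A.range_disjointed_sets by auto
      have "disjointed F \<in> {A. range A \<subseteq> \<A> \<and> disjoint_family A \<and> X \<subseteq> \<Union> (range A)}"
        using F r by (auto simp: disjoint_family_disjointed UN_disjointed_eq)
      hence "(INF A\<in>{A. range A \<subseteq> \<A> \<and> disjoint_family A \<and> X \<subseteq> \<Union> (range A)}. \<Sum>i. mu \<phi> (A i))
         \<le> (\<Sum>i. mu \<phi> (disjointed F i))" by (rule INF_lower)
      also have "\<dots> \<le> (\<Sum>i. mu \<phi> (F i))"
      proof (rule suminf_le)
        fix n show "mu \<phi> (disjointed F n) \<le> mu \<phi> (F n)"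
          using r F by (intro increasingD[OF mu_inc disjointed_subset]) auto
      qed auto
      finally show "(INF A\<in>{A. range A \<subseteq> \<A> \<and> disjoint_family A \<and> X \<subseteq> \<Union> (range A)}. \<Sum>i. mu \<phi> (A i))
         \<le> (\<Sum>i. mu \<phi> (F i))" .
    qed
  qed
qed

abbreviation MP where "MP \<phi> \<equiv> Mphi_sets \<Omega> \<A> p \<phi>"

lemma ms: "measure_space \<Omega> (MP \<phi>) (MS \<phi>)"
  unfolding Mphi_sets_def Mstar_eq
  by (rule sigma_algebra.caratheodory_lemma[OF sigma_algebra_Pow A.outer_measure_space_outer_measure[OF mu_pos mu_inc]])

lemma A_sub_MP: "\<A> \<subseteq> MP \<phi>"
  unfolding Mphi_sets_def Mstar_eq
  by (rule A.algebra_subset_lambda_system[OF mu_pos mu_inc A.countably_additive_additive[OF mu_pos mu_ca]])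

lemma agree: "A \<in> \<A> \<Longrightarrow> MS \<phi> A = ennreal ((norm (p A \<phi>))\<^sup>2)"
  unfolding Mstar_eq using A.outer_measure_agrees[OF mu_pos mu_ca] by (simp add: mu_def)

lemma sa_MP: "sigma_algebra \<Omega> (MP \<phi>)" using ms[of \<phi>] by (simp add: measure_space_def)

lemma sa_M: "sigma_algebra \<Omega> (Msets \<Omega> \<A> p)"
proof -
  have h: "MP \<phi> \<subseteq> Pow \<Omega> \<and> {} \<in> MP \<phi> \<and> (\<forall>s\<in>MP \<phi>. \<Omega> - s \<in> MP \<phi>)
      \<and> (\<forall>A. range A \<subseteq> MP \<phi> \<longrightarrow> (\<Union>i::nat. A i) \<in> MP \<phi>)" for \<phi>
    using sa_MP[of \<phi>] unfolding sigma_algebra_iff2 .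
  show ?thesis unfolding sigma_algebra_iff2
  proof (intro conjI ballI allI impI)
    show "Msets \<Omega> \<A> p \<subseteq> Pow \<Omega>"
    proof
      fix s assume "s \<in> Msets \<Omega> \<A> p"
      hence "s \<in> MP 0" unfolding Msets_def by blast
      thus "s \<in> Pow \<Omega>" using h[of 0] by blast
    qed
    show "{} \<in> Msets \<Omega> \<A> p" unfolding Msets_def using h by simp
    show "\<Omega> - s \<in> Msets \<Omega> \<A> p" if "s \<in> Msets \<Omega> \<A> p" for s
      using that h unfolding Msets_def by simp
    show "(\<Union>i. A i) \<in> Msets \<Omega> \<A> p" if "range A \<subseteq> Msets \<Omega> \<A> p" for A :: "nat \<Rightarrow> _"
    proof -
      have "range A \<subseteq> MP \<phi>" for \<phi> using that unfolding Msets_def by blast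
      thus ?thesis using h unfolding Msets_def by simp
    qed
  qed
qed

lemma A_sub_M: "\<A> \<subseteq> Msets \<Omega> \<A> p" unfolding Msets_def using A_sub_MP by blast

lemma sigma_sub_M: "sigma_sets \<Omega> \<A> \<subseteq> Msets \<Omega> \<A> p"
  by (rule sigma_algebra.sigma_sets_subset[OF sa_M A_sub_M])

lemma M_sub_MP: "Msets \<Omega> \<A> p \<subseteq> MP \<phi>" unfolding Msets_def by blast

lemma MS_mono: "X \<subseteq> Y \<Longrightarrow> MS \<phi> X \<le> MS \<phi> Y"
  unfolding Mstar_def by (rule INF_superset_mono) auto

lemma p_Omega: "p \<Omega> = id" using pvm unfolding is_pvm_def by simp

lemma MS_Omega: "MS \<phi> \<Omega> = ennreal ((norm \<phi>)\<^sup>2)"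
  using agree[OF A.top] p_Omega by simp

lemma MS_le: "X \<subseteq> \<Omega> \<Longrightarrow> MS \<phi> X \<le> ennreal ((norm \<phi>)\<^sup>2)"
  using MS_mono MS_Omega by metis

definition m where "m \<phi> X = enn2real (MS \<phi> X)"

lemma MS_m: "X \<subseteq> \<Omega> \<Longrightarrow> MS \<phi> X = ennreal (m \<phi> X)"
  unfolding m_def using MS_le[of X \<phi>]
  by (metis ennreal_enn2real ennreal_less_top le_less_trans less_imp_neq top.not_eq_extremum)

lemma m_nonneg: "m \<phi> X \<ge> 0" unfolding m_def by simp

lemma m_le: "X \<subseteq> \<Omega> \<Longrightarrow> m \<phi> X \<le> (norm \<phi>)\<^sup>2"
  using MS_le[of X \<phi>] MS_m[of X \<phi>] by simp

lemma m_mono: "X \<subseteq> Y \<Longrightarrow> Y \<subseteq> \<Omega> \<Longrightarrow> m \<phi> X \<le> m \<phi> Y"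
proof -
  assume a: "X \<subseteq> Y" "Y \<subseteq> \<Omega>"
  have "ennreal (m \<phi> X) \<le> ennreal (m \<phi> Y)" using MS_mono[OF a(1), of \<phi>] MS_m[of X \<phi>] MS_m[OF a(2), of \<phi>] a by auto
  thus ?thesis using ennreal_le_iff[OF m_nonneg] by blast
qed

lemma m_Omega: "m \<phi> \<Omega> = (norm \<phi>)\<^sup>2"
  unfolding m_def MS_Omega by simp

lemma m_agree: "A \<in> \<A> \<Longrightarrow> m \<phi> A = (norm (p A \<phi>))\<^sup>2"
  unfolding m_def agree by simp

definition N where "N \<phi> = measure_of \<Omega> (MP \<phi>) (MS \<phi>)"

lemma sets_N: "sets (N \<phi>) = MP \<phi>"
  unfolding N_def using sa_MP by (simp add: sigma_algebra.sets_measure_of_eq)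

lemma emeasure_N: "X \<in> MP \<phi> \<Longrightarrow> emeasure (N \<phi>) X = MS \<phi> X"
  unfolding N_def using ms[of \<phi>] by (intro emeasure_measure_of_sigma) (auto simp: measure_space_def)

lemma space_N: "space (N \<phi>) = \<Omega>"
  unfolding N_def by (rule sigma_algebra.space_measure_of_eq[OF sa_MP])

lemma finite_N: "finite_measure (N \<phi>)"
proof (rule finite_measureI)
  have "\<Omega> \<in> MP \<phi>" using A_sub_MP A.top by blast
  hence "emeasure (N \<phi>) (space (N \<phi>)) = ennreal ((norm \<phi>)\<^sup>2)" unfolding space_N by (simp add: emeasure_N MS_Omega)
  thus "emeasure (N \<phi>) (space (N \<phi>)) \<noteq> \<infinity>" by simp
qed

lemma measure_N: "X \<in> MP \<phi> \<Longrightarrow> measure (N \<phi>) X = m \<phi> X"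
  unfolding measure_def m_def using emeasure_N by simp

lemma MP_sub: "X \<in> MP \<phi> \<Longrightarrow> X \<subseteq> \<Omega>"
  using sa_MP[of \<phi>] unfolding sigma_algebra_iff2 by blast

lemma J_norm_p: "A \<in> \<A> \<Longrightarrow> norm (p A (J \<phi>)) = norm (p A \<phi>)"
  using proj_J[OF pvm_proj[OF pvm]] cs_norm[OF cs] by metis

lemma MS_J: "MS (J \<phi>) X = MS \<phi> X"
  unfolding Mstar_def
proof (rule INF_cong[OF refl])
  fix F :: "nat \<Rightarrow> 'b set"
  show "F \<in> {F. range F \<subseteq> \<A> \<and> X \<subseteq> \<Union> (range F)} \<Longrightarrow> (\<Sum>i. ennreal ((norm (p (F i) (J \<phi>)))\<^sup>2)) = (\<Sum>i. ennreal ((norm (p (F i) \<phi>))\<^sup>2))"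
  proof -
    assume "F \<in> {F. range F \<subseteq> \<A> \<and> X \<subseteq> \<Union> (range F)}"
    hence "\<And>i. F i \<in> \<A>" by auto
    hence "\<And>i. norm (p (F i) (J \<phi>)) = norm (p (F i) \<phi>)" by (rule J_norm_p)
    thus ?thesis by simp
  qed
qed

lemma m_J: "m (J \<phi>) X = m \<phi> X" unfolding m_def MS_J ..

end

lemma summable_orthI:
  fixes x :: "nat \<Rightarrow> 'a::{real_normed_vector, complete_space}" and a :: "nat \<Rightarrow> real"
  assumes pyth: "\<And>m n. (norm (\<Sum>i\<in>{m..<n}. x i))\<^sup>2 = (\<Sum>i\<in>{m..<n}. a i)" and sa: "summable a"
  shows "summable x"
  unfolding summable_iff_convergent
proof (rule Cauchy_convergent, rule CauchyI)
  fix e :: real assume e: "0 < e"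
  obtain N where N: "\<And>m n. m \<ge> N \<Longrightarrow> norm (\<Sum>i\<in>{m..<n}. a i) < e\<^sup>2"
    using sa unfolding summable_Cauchy using e by (meson zero_less_power)
  have key: "norm ((\<Sum>i<n. x i) - (\<Sum>i<m. x i)) < e" if "N \<le> m" "m \<le> n" for m n
  proof -
    have "(\<Sum>i<n. x i) - (\<Sum>i<m. x i) = (\<Sum>i\<in>{m..<n}. x i)"
      using sum_diff_nat_ivl[of 0 m n x] that by (simp add: lessThan_atLeast0)
    moreover have "(norm (\<Sum>i\<in>{m..<n}. x i))\<^sup>2 < e\<^sup>2"
      using N[OF that(1), of n] pyth[of m n] by simp
    ultimately show ?thesis using e by (simp add: power_less_imp_less_base)
  qed
  show "\<exists>M. \<forall>m\<ge>M. \<forall>n\<ge>M. norm ((\<Sum>i<m. x i) - (\<Sum>i<n. x i)) < e"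
  proof (intro exI allI impI)
    fix m n assume "N \<le> m" "N \<le> n"
    thus "norm ((\<Sum>i<m. x i) - (\<Sum>i<n. x i)) < e"
      using key[of n m] key[of m n] by (cases "m \<le> n") (auto simp: norm_minus_commute)
  qed
qed

context pv begin

interpretation A: algebra \<Omega> \<A> by (rule alg)

lemma sU_A: "A \<in> \<A> \<Longrightarrow> A \<in> sigma_unions \<A>"
  unfolding sigma_unions_def by (rule CollectI, rule exI[of _ "\<lambda>_. A"]) auto

lemma sU_Omega: "\<Omega> \<in> sigma_unions \<A>" using sU_A A.top by blast

lemma sU_sigma: "B \<in> sigma_unions \<A> \<Longrightarrow> B \<in> sigma_sets \<Omega> \<A>"
proof -
  assume "B \<in> sigma_unions \<A>"
  then obtain F :: "nat \<Rightarrow> 'b set" where F: "range F \<subseteq> \<A>" "B = (\<Union>i. F i)" unfolding sigma_unions_def by blast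
  have "F i \<in> sigma_sets \<Omega> \<A>" for i using F(1) by (intro sigma_sets.Basic) blast
  hence "(\<Union>i. F i) \<in> sigma_sets \<Omega> \<A>" by (rule sigma_sets.Union)
  thus ?thesis using F(2) by simp
qed

lemma sU_M: "B \<in> sigma_unions \<A> \<Longrightarrow> B \<in> Msets \<Omega> \<A> p"
  using sU_sigma sigma_sub_M by blast

lemma M_sub: "B \<in> Msets \<Omega> \<A> p \<Longrightarrow> B \<subseteq> \<Omega>"
  using M_sub_MP MP_sub by blast

lemma sU_sub: "B \<in> sigma_unions \<A> \<Longrightarrow> B \<subseteq> \<Omega>"
  using sU_M M_sub by blast

lemma sU_Int: assumes "B \<in> sigma_unions \<A>" "B' \<in> sigma_unions \<A>" shows "B \<inter> B' \<in> sigma_unions \<A>"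
proof -
  obtain F G :: "nat \<Rightarrow> 'b set" where F: "range F \<subseteq> \<A>" "B = (\<Union>i. F i)" and G: "range G \<subseteq> \<A>" "B' = (\<Union>i. G i)"
    using assms unfolding sigma_unions_def by blast
  define H where "H k = F (fst (prod_decode k)) \<inter> G (snd (prod_decode k))" for k
  have "range H \<subseteq> \<A>" using F G unfolding H_def by (auto intro!: A.Int)
  moreover have "B \<inter> B' = (\<Union>k. H k)"
  proof
    show "B \<inter> B' \<subseteq> (\<Union>k. H k)"
    proof
      fix x assume "x \<in> B \<inter> B'"
      then obtain i j where "x \<in> F i" "x \<in> G j" using F G by blast
      hence "x \<in> H (prod_encode (i, j))" unfolding H_def by simp
      thus "x \<in> (\<Union>k. H k)" by blast
    qed
    show "(\<Union>k. H k) \<subseteq> B \<inter> B'" using F G unfolding H_def by blast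
  qed
  ultimately show ?thesis unfolding sigma_unions_def by blast
qed

lemma p_lin: "A \<in> \<A> \<Longrightarrow> linear (p A)" using proj_lin pvm_proj[OF pvm] by blast

lemma exists_PB:
  assumes B: "B \<in> sigma_unions \<A>"
  shows "\<exists>P. is_projection J P \<and> (\<forall>\<phi>. (norm (P \<phi>))\<^sup>2 = m \<phi> B)"
proof -
  obtain F :: "nat \<Rightarrow> 'b set" where F: "range F \<subseteq> \<A>" "B = (\<Union>i. F i)"
    using B unfolding sigma_unions_def by blast
  define D where "D = disjointed F"
  have D: "range D \<subseteq> \<A>" "disjoint_family D" "B = (\<Union>i. D i)"
    using F A.range_disjointed_sets unfolding D_def by (auto simp: disjoint_family_disjointed UN_disjointed_eq)
  have Din: "D i \<in> \<A>" for i using D by auto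
  have orth: "inner (p (D i) \<phi>) (p (D j) \<phi>) = 0" if "i \<noteq> j" for i j \<phi>
    using D(2) that Din by (intro pvm_orth[OF pvm alg]) (auto simp: disjoint_family_on_def)
  have pyth: "(norm (\<Sum>i\<in>I. p (D i) \<phi>))\<^sup>2 = (\<Sum>i\<in>I. (norm (p (D i) \<phi>))\<^sup>2)" if "finite I" for I \<phi>
  proof (rule norm_sum_Pythagorean[OF that])
    show "pairwise (\<lambda>i j. orthogonal (p (D i) \<phi>) (p (D j) \<phi>)) I"
      unfolding pairwise_def orthogonal_def using orth by blast
  qed
  have asums: "(\<lambda>i. (norm (p (D i) \<phi>))\<^sup>2) sums m \<phi> B" for \<phi>
  proof -
    interpret finite_measure "N \<phi>" by (rule finite_N)
    have "range D \<subseteq> sets (N \<phi>)" unfolding sets_N using D(1) A_sub_MP by blast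
    from finite_measure_UNION[OF this D(2)]
    have "(\<lambda>i. measure (N \<phi>) (D i)) sums measure (N \<phi>) (\<Union>i. D i)" .
    moreover have "measure (N \<phi>) (D i) = (norm (p (D i) \<phi>))\<^sup>2" for i
    proof -
      have "D i \<in> MP \<phi>" using Din A_sub_MP by blast
      hence "measure (N \<phi>) (D i) = m \<phi> (D i)" by (rule measure_N)
      thus ?thesis using m_agree[OF Din] by simp
    qed
    moreover have "measure (N \<phi>) (\<Union>i. D i) = m \<phi> B"
    proof -
      have "B \<in> MP \<phi>" using sU_M[OF B] M_sub_MP by blast
      thus ?thesis using measure_N D(3) by simp
    qed
    ultimately show ?thesis by simp
  qed
  have summ: "summable (\<lambda>i. p (D i) \<phi>)" for \<phi>
  proof (rule summable_orthI)
    show "(norm (\<Sum>i\<in>{m..<n}. p (D i) \<phi>))\<^sup>2 = (\<Sum>i\<in>{m..<n}. (norm (p (D i) \<phi>))\<^sup>2)" for m n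
      by (rule pyth) simp
    show "summable (\<lambda>i. (norm (p (D i) \<phi>))\<^sup>2)" using asums[of \<phi>] by (rule sums_summable)
  qed
  define P where "P \<phi> = (\<Sum>i. p (D i) \<phi>)" for \<phi>
  have Pnorm: "(norm (P \<phi>))\<^sup>2 = m \<phi> B" for \<phi>
  proof -
    have "(\<lambda>n. \<Sum>i<n. p (D i) \<phi>) \<longlonglongrightarrow> P \<phi>" unfolding P_def using summ summable_LIMSEQ by blast
    hence "(\<lambda>n. (norm (\<Sum>i<n. p (D i) \<phi>))\<^sup>2) \<longlonglongrightarrow> (norm (P \<phi>))\<^sup>2" by (intro tendsto_power tendsto_norm)
    moreover have "(\<lambda>n. (norm (\<Sum>i<n. p (D i) \<phi>))\<^sup>2) \<longlonglongrightarrow> m \<phi> B"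
      using asums[of \<phi>] unfolding sums_def by (simp add: pyth)
    ultimately show ?thesis using LIMSEQ_unique by blast
  qed
  have lin: "linear P"
  proof (rule linearI)
    fix x y show "P (x + y) = P x + P y"
      unfolding P_def using summ[of x] summ[of y] by (simp add: suminf_add linear_add[OF p_lin[OF Din]])
    fix c :: real show "P (c *\<^sub>R x) = c *\<^sub>R P x"
      unfolding P_def using summ[of x] by (simp add: suminf_scaleR_right linear_scale[OF p_lin[OF Din]])
  qed
  have inner_P: "inner (P x) y = (\<Sum>i. inner (p (D i) x) y)" for x y
    unfolding P_def using bounded_linear.suminf[OF bounded_linear_inner_left summ[of x]] by simp
  have sym: "inner (P x) y = inner x (P y)" for x y
  proof -
    have "inner (P x) y = (\<Sum>i. inner (p (D i) x) y)" by (rule inner_P)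
    also have "\<dots> = (\<Sum>i. inner (p (D i) y) x)" using proj_sym[OF pvm_proj[OF pvm Din]] by (simp add: inner_commute)
    also have "\<dots> = inner (P y) x" by (rule inner_P[symmetric])
    finally show ?thesis by (simp add: inner_commute)
  qed
  have PJ: "P (J x) = J (P x)" for x
  proof -
    have "J (P x) = (\<Sum>i. J (p (D i) x))"
      unfolding P_def using bounded_linear.suminf[OF cs_bl[OF cs] summ[of x]] by simp
    also have "\<dots> = P (J x)" unfolding P_def using proj_J[OF pvm_proj[OF pvm Din]] by simp
    finally show ?thesis by simp
  qed
  have self: "inner (P x) x = inner (P x) (P x)" for x
  proof -
    have "inner (P x) x = (\<Sum>i. inner (p (D i) x) x)" by (rule inner_P)
    also have "\<dots> = (\<Sum>i. (norm (p (D i) x))\<^sup>2)" using proj_inner_self[OF pvm_proj[OF pvm Din]] by simp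
    also have "\<dots> = m x B" using asums sums_unique by metis
    also have "\<dots> = inner (P x) (P x)" using Pnorm by (simp add: power2_norm_eq_inner)
    finally show ?thesis .
  qed
  have "is_projection J P" using lin sym PJ self by (intro proj_intro[of P J]) auto
  thus ?thesis using Pnorm by blast
qed

end

context pv begin

definition PB where "PB B = (SOME P. is_projection J P \<and> (\<forall>\<phi>. (norm (P \<phi>))\<^sup>2 = m \<phi> B))"

lemma PB: assumes "B \<in> sigma_unions \<A>"
  shows "is_projection J (PB B)" "(norm (PB B \<phi>))\<^sup>2 = m \<phi> B"
proof -
  have "is_projection J (PB B) \<and> (\<forall>\<phi>. (norm (PB B \<phi>))\<^sup>2 = m \<phi> B)"
    unfolding PB_def by (rule someI_ex[OF exists_PB[OF assms]])
  thus "is_projection J (PB B)" "(norm (PB B \<phi>))\<^sup>2 = m \<phi> B" by auto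
qed

lemma PB_fix_iff: assumes "B \<in> sigma_unions \<A>"
  shows "PB B \<phi> = \<phi> \<longleftrightarrow> m \<phi> B = (norm \<phi>)\<^sup>2"
proof -
  have "PB B \<phi> = \<phi> \<longleftrightarrow> norm (PB B \<phi>) = norm \<phi>" by (rule proj_fix_iff[OF PB(1)[OF assms]])
  also have "\<dots> \<longleftrightarrow> (norm (PB B \<phi>))\<^sup>2 = (norm \<phi>)\<^sup>2" by (simp add: power2_eq_iff_nonneg)
  also have "\<dots> \<longleftrightarrow> m \<phi> B = (norm \<phi>)\<^sup>2" using PB(2)[OF assms] by simp
  finally show ?thesis .
qed

lemma PB_fix_mono: assumes "B \<in> sigma_unions \<A>" "B' \<in> sigma_unions \<A>" "B \<subseteq> B'" "PB B \<phi> = \<phi>"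
  shows "PB B' \<phi> = \<phi>"
proof -
  have "m \<phi> B = (norm \<phi>)\<^sup>2" using PB_fix_iff[OF assms(1)] assms(4) by simp
  moreover have "m \<phi> B \<le> m \<phi> B'" by (rule m_mono[OF assms(3) sU_sub[OF assms(2)]])
  moreover have "m \<phi> B' \<le> (norm \<phi>)\<^sup>2" by (rule m_le[OF sU_sub[OF assms(2)]])
  ultimately have "m \<phi> B' = (norm \<phi>)\<^sup>2" by simp
  thus ?thesis using PB_fix_iff[OF assms(2)] by simp
qed

lemma PB_nested: assumes "B \<in> sigma_unions \<A>" "B' \<in> sigma_unions \<A>" "B' \<subseteq> B"
  shows "(norm (PB B \<phi> - PB B' \<phi>))\<^sup>2 = m \<phi> B - m \<phi> B'"
proof -
  have P: "is_projection J (PB B)" and P': "is_projection J (PB B')" using PB assms by auto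
  define y where "y = PB B' \<phi>"
  have "PB B' y = y" unfolding y_def by (rule proj_idem[OF P'])
  hence Py: "PB B y = y" by (rule PB_fix_mono[OF assms(2,1,3)])
  have "inner (PB B \<phi>) y = inner \<phi> (PB B y)" by (rule proj_sym[OF P])
  also have "\<dots> = inner y \<phi>" using Py by (simp add: inner_commute)
  also have "\<dots> = (norm y)\<^sup>2" unfolding y_def by (rule proj_inner_self[OF P'])
  finally have i: "inner (PB B \<phi>) y = (norm y)\<^sup>2" .
  have "(norm (PB B \<phi> - y))\<^sup>2 = (norm (PB B \<phi>))\<^sup>2 - 2 * inner (PB B \<phi>) y + (norm y)\<^sup>2"
    by (simp add: power2_norm_eq_inner inner_diff_left inner_diff_right inner_commute)
  also have "\<dots> = m \<phi> B - m \<phi> B'" using i PB(2)[OF assms(1)] PB(2)[OF assms(2)] unfolding y_def by simp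
  finally show ?thesis unfolding y_def .
qed

definition Hs where "Hs A = \<Inter>{{\<phi>. PB B \<phi> = \<phi>} | B. B \<in> sigma_unions \<A> \<and> A \<subseteq> B}"

lemma HsI: "(\<And>B. B \<in> sigma_unions \<A> \<Longrightarrow> A \<subseteq> B \<Longrightarrow> PB B \<phi> = \<phi>) \<Longrightarrow> \<phi> \<in> Hs A"
  unfolding Hs_def by blast

lemma HsD: "\<phi> \<in> Hs A \<Longrightarrow> B \<in> sigma_unions \<A> \<Longrightarrow> A \<subseteq> B \<Longrightarrow> PB B \<phi> = \<phi>"
  unfolding Hs_def by blast

lemma PB_lin: "B \<in> sigma_unions \<A> \<Longrightarrow> linear (PB B)" using PB(1) proj_lin by blast

lemma Hs_add: "x \<in> Hs A \<Longrightarrow> y \<in> Hs A \<Longrightarrow> x + y \<in> Hs A"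
  by (intro HsI) (simp add: linear_add[OF PB_lin] HsD)

lemma Hs_diff: "x \<in> Hs A \<Longrightarrow> y \<in> Hs A \<Longrightarrow> x - y \<in> Hs A"
  by (intro HsI) (simp add: linear_diff[OF PB_lin] HsD)

lemma Hs_scale: "x \<in> Hs A \<Longrightarrow> c *\<^sub>R x \<in> Hs A"
  by (intro HsI) (simp add: linear_scale[OF PB_lin] HsD)

lemma Hs_J: "x \<in> Hs A \<Longrightarrow> J x \<in> Hs A"
  by (intro HsI) (simp add: proj_J[OF PB(1)] HsD)

end

context pv begin

lemma approx_sU:
  assumes A: "A \<subseteq> \<Omega>" and e: "e > 0"
  shows "\<exists>B. B \<in> sigma_unions \<A> \<and> A \<subseteq> B \<and> m \<phi> B < m \<phi> A + e"
proof -
  have "MS \<phi> A < ennreal (m \<phi> A + e)" unfolding MS_m[OF A]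
    using e m_nonneg[of \<phi> A] by (intro ennreal_lessI) auto
  then obtain F where F: "F \<in> {F. range F \<subseteq> \<A> \<and> A \<subseteq> (\<Union>i. F i)}"
      and lt: "(\<Sum>i. ennreal ((norm (p (F i) \<phi>))\<^sup>2)) < ennreal (m \<phi> A + e)"
    unfolding Mstar_def INF_less_iff by blast
  define B where "B = (\<Union>i. F i)"
  have Bs: "B \<in> sigma_unions \<A>" unfolding sigma_unions_def B_def using F by blast
  have "MS \<phi> B \<le> (\<Sum>i. ennreal ((norm (p (F i) \<phi>))\<^sup>2))"
    unfolding Mstar_def B_def using F by (intro INF_lower) auto
  hence "ennreal (m \<phi> B) < ennreal (m \<phi> A + e)" using lt MS_m[OF sU_sub[OF Bs]] by simp
  hence "m \<phi> B < m \<phi> A + e" using ennreal_less_iff[OF m_nonneg] by blast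
  thus ?thesis using Bs F B_def by blast
qed

lemma exists_q:
  assumes A: "A \<subseteq> \<Omega>"
  shows "\<exists>\<psi>. \<psi> \<in> Hs A \<and> (\<forall>\<eta>\<in>Hs A. inner (\<phi> - \<psi>) \<eta> = 0) \<and> (norm \<psi>)\<^sup>2 = m \<phi> A"
proof -
  define c where "c = m \<phi> A"
  have "\<forall>n. \<exists>B. B \<in> sigma_unions \<A> \<and> A \<subseteq> B \<and> m \<phi> B < c + inverse (real (Suc n))"
    unfolding c_def using approx_sU[OF A] by simp
  then obtain B where B: "\<And>n. B n \<in> sigma_unions \<A>" "\<And>n. A \<subseteq> B n"
      "\<And>n. m \<phi> (B n) < c + inverse (real (Suc n))"
    by metis
  define C where "C = rec_nat (B 0) (\<lambda>n X. X \<inter> B (Suc n))"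
  have C0: "C 0 = B 0" and CS: "C (Suc n) = C n \<inter> B (Suc n)" for n unfolding C_def by simp_all
  have Cs: "C n \<in> sigma_unions \<A>" for n
    by (induct n) (simp_all add: C0 CS B(1) sU_Int)
  have AC: "A \<subseteq> C n" for n
    by (induct n) (simp_all add: C0 CS B(2))
  have CB: "C n \<subseteq> B n" for n
    by (cases n) (auto simp: C0 CS)
  have dec: "decseq C" by (rule decseq_SucI) (simp add: CS)
  have Csub: "C n \<subseteq> \<Omega>" for n using sU_sub[OF Cs] .
  have lo: "c \<le> m \<phi> (C n)" for n unfolding c_def by (rule m_mono[OF AC Csub])
  have hi: "m \<phi> (C n) < c + inverse (real (Suc n))" for n
  proof -
    have "m \<phi> (C n) \<le> m \<phi> (B n)" by (rule m_mono[OF CB sU_sub[OF B(1)]])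
    thus ?thesis using B(3)[of n] by linarith
  qed
  define \<psi>s where "\<psi>s n = PB (C n) \<phi>" for n
  have dist_le: "(norm (\<psi>s n - \<psi>s k))\<^sup>2 \<le> inverse (real (Suc n))" if "n \<le> k" for n k
  proof -
    have "C k \<subseteq> C n" using dec that by (simp add: decseq_def)
    hence "(norm (\<psi>s n - \<psi>s k))\<^sup>2 = m \<phi> (C n) - m \<phi> (C k)"
      unfolding \<psi>s_def by (rule PB_nested[OF Cs Cs])
    thus ?thesis using lo[of k] hi[of n] by simp
  qed
  have "Cauchy \<psi>s"
  proof (rule CauchyI)
    fix e :: real assume e: "0 < e"
    obtain M where M: "inverse (real (Suc M)) < e\<^sup>2" using reals_Archimedean[of "e\<^sup>2"] e by auto
    have key: "norm (\<psi>s n - \<psi>s k) < e" if "M \<le> n" "n \<le> k" for n k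
    proof -
      have i: "inverse (real (Suc n)) \<le> inverse (real (Suc M))" using that by (simp add: field_simps)
      have "(norm (\<psi>s n - \<psi>s k))\<^sup>2 < e\<^sup>2" using dist_le[OF that(2)] M i by linarith
      thus ?thesis using e by (simp add: power_less_imp_less_base)
    qed
    show "\<exists>M. \<forall>m\<ge>M. \<forall>n\<ge>M. norm (\<psi>s m - \<psi>s n) < e"
    proof (intro exI allI impI)
      fix m n assume "M \<le> m" "M \<le> n"
      thus "norm (\<psi>s m - \<psi>s n) < e"
        using key[of m n] key[of n m] by (cases "m \<le> n") (auto simp: norm_minus_commute)
    qed
  qed
  then obtain \<psi> where lim: "\<psi>s \<longlonglongrightarrow> \<psi>" using Cauchy_convergent convergent_def by blast
  have mC: "(\<lambda>n. m \<phi> (C n)) \<longlonglongrightarrow> c"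
  proof (rule tendsto_sandwich[of "\<lambda>_. c" _ _ "\<lambda>n. c + inverse (real (Suc n))"])
    show "\<forall>\<^sub>F n in sequentially. c \<le> m \<phi> (C n)" using lo by simp
    show "\<forall>\<^sub>F n in sequentially. m \<phi> (C n) \<le> c + inverse (real (Suc n))" using hi by (simp add: less_imp_le)
    show "(\<lambda>n. c + inverse (real (Suc n))) \<longlonglongrightarrow> c"
      using tendsto_add[OF tendsto_const LIMSEQ_inverse_real_of_nat, of c] by simp
  qed simp
  have "(\<lambda>n. (norm (\<psi>s n))\<^sup>2) \<longlonglongrightarrow> (norm \<psi>)\<^sup>2" using lim by (intro tendsto_power tendsto_norm)
  moreover have "(\<lambda>n. (norm (\<psi>s n))\<^sup>2) = (\<lambda>n. m \<phi> (C n))" unfolding \<psi>s_def using PB(2)[OF Cs] by simp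
  ultimately have nrm: "(norm \<psi>)\<^sup>2 = c" using mC LIMSEQ_unique by metis
  have inH: "\<psi> \<in> Hs A"
  proof (rule HsI)
    fix B0 assume B0: "B0 \<in> sigma_unions \<A>" "A \<subseteq> B0"
    define D where "D n = C n \<inter> B0" for n
    have Ds: "D n \<in> sigma_unions \<A>" for n unfolding D_def using Cs B0(1) by (rule sU_Int)
    have DC: "D n \<subseteq> C n" for n unfolding D_def by blast
    have AD: "A \<subseteq> D n" for n unfolding D_def using AC B0(2) by blast
    have sq: "(norm (\<psi>s n - PB (D n) \<phi>))\<^sup>2 \<le> inverse (real (Suc n))" for n
    proof -
      have "(norm (\<psi>s n - PB (D n) \<phi>))\<^sup>2 = m \<phi> (C n) - m \<phi> (D n)"
        unfolding \<psi>s_def by (rule PB_nested[OF Cs Ds DC])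
      moreover have "c \<le> m \<phi> (D n)" unfolding c_def by (rule m_mono[OF AD sU_sub[OF Ds]])
      ultimately show ?thesis using hi[of n] by simp
    qed
    have "(\<lambda>n. (norm (\<psi>s n - PB (D n) \<phi>))\<^sup>2) \<longlonglongrightarrow> 0"
    proof (rule tendsto_sandwich[of "\<lambda>_. 0" _ _ "\<lambda>n. inverse (real (Suc n))"])
      show "\<forall>\<^sub>F n in sequentially. 0 \<le> (norm (\<psi>s n - PB (D n) \<phi>))\<^sup>2" by simp
      show "\<forall>\<^sub>F n in sequentially. (norm (\<psi>s n - PB (D n) \<phi>))\<^sup>2 \<le> inverse (real (Suc n))"
        using sq by simp
    qed (simp, rule LIMSEQ_inverse_real_of_nat)
    hence "(\<lambda>n. sqrt ((norm (\<psi>s n - PB (D n) \<phi>))\<^sup>2)) \<longlonglongrightarrow> sqrt 0" by (rule tendsto_real_sqrt)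
    hence "(\<lambda>n. norm (\<psi>s n - PB (D n) \<phi>)) \<longlonglongrightarrow> 0" by simp
    hence "(\<lambda>n. \<psi>s n - PB (D n) \<phi>) \<longlonglongrightarrow> 0" by (rule tendsto_norm_zero_cancel)
    hence "(\<lambda>n. \<psi>s n - (\<psi>s n - PB (D n) \<phi>)) \<longlonglongrightarrow> \<psi> - 0" using lim by (intro tendsto_diff)
    hence limD: "(\<lambda>n. PB (D n) \<phi>) \<longlonglongrightarrow> \<psi>" by simp
    have fixD: "PB B0 (PB (D n) \<phi>) = PB (D n) \<phi>" for n
    proof (rule PB_fix_mono[OF Ds B0(1)])
      show "D n \<subseteq> B0" unfolding D_def by blast
      show "PB (D n) (PB (D n) \<phi>) = PB (D n) \<phi>" by (rule proj_idem[OF PB(1)[OF Ds]])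
    qed
    have "(\<lambda>n. PB B0 (PB (D n) \<phi>)) \<longlonglongrightarrow> PB B0 \<psi>"
      by (rule bounded_linear.tendsto[OF proj_bl[OF PB(1)[OF B0(1)]] limD])
    hence "(\<lambda>n. PB (D n) \<phi>) \<longlonglongrightarrow> PB B0 \<psi>" using fixD by simp
    thus "PB B0 \<psi> = \<psi>" using limD LIMSEQ_unique by blast
  qed
  have orth: "inner (\<phi> - \<psi>) \<eta> = 0" if eta: "\<eta> \<in> Hs A" for \<eta>
  proof -
    have "inner (\<phi> - \<psi>s n) \<eta> = 0" for n
    proof -
      have fx: "PB (C n) \<eta> = \<eta>" by (rule HsD[OF eta Cs AC])
      have "inner (\<psi>s n) \<eta> = inner \<phi> (PB (C n) \<eta>)" unfolding \<psi>s_def by (rule proj_sym[OF PB(1)[OF Cs]])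
      thus ?thesis using fx by (simp add: inner_diff_left)
    qed
    moreover have "(\<lambda>n. inner (\<phi> - \<psi>s n) \<eta>) \<longlonglongrightarrow> inner (\<phi> - \<psi>) \<eta>"
      using lim by (intro tendsto_inner tendsto_diff tendsto_const)
    ultimately show ?thesis using LIMSEQ_unique[OF _ tendsto_const[of 0]] by simp
  qed
  show ?thesis using inH orth nrm c_def by blast
qed

end

context pv begin

definition q where "q A \<phi> = (THE \<psi>. \<psi> \<in> Hs A \<and> (\<forall>\<eta>\<in>Hs A. inner (\<phi> - \<psi>) \<eta> = 0))"

lemma q_uniq:
  assumes "\<psi>1 \<in> Hs A" "\<forall>\<eta>\<in>Hs A. inner (\<phi> - \<psi>1) \<eta> = 0"
    "\<psi>2 \<in> Hs A" "\<forall>\<eta>\<in>Hs A. inner (\<phi> - \<psi>2) \<eta> = 0"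
  shows "\<psi>1 = \<psi>2"
proof -
  have d: "\<psi>1 - \<psi>2 \<in> Hs A" by (rule Hs_diff[OF assms(1,3)])
  have "inner (\<phi> - \<psi>2) (\<psi>1 - \<psi>2) - inner (\<phi> - \<psi>1) (\<psi>1 - \<psi>2) = 0"
    using assms(2,4) d by simp
  hence "inner (\<psi>1 - \<psi>2) (\<psi>1 - \<psi>2) = 0" by (simp add: inner_diff_left)
  thus ?thesis by simp
qed

lemma q_eqI:
  assumes "\<psi> \<in> Hs A" "\<forall>\<eta>\<in>Hs A. inner (\<phi> - \<psi>) \<eta> = 0"
  shows "q A \<phi> = \<psi>"
  unfolding q_def
proof (rule the_equality)
  show "\<psi> \<in> Hs A \<and> (\<forall>\<eta>\<in>Hs A. inner (\<phi> - \<psi>) \<eta> = 0)" using assms by blast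
  fix \<psi>' assume "\<psi>' \<in> Hs A \<and> (\<forall>\<eta>\<in>Hs A. inner (\<phi> - \<psi>') \<eta> = 0)"
  thus "\<psi>' = \<psi>" using q_uniq assms by blast
qed

lemma q_char: assumes "A \<subseteq> \<Omega>"
  shows "q A \<phi> \<in> Hs A" "\<forall>\<eta>\<in>Hs A. inner (\<phi> - q A \<phi>) \<eta> = 0" "(norm (q A \<phi>))\<^sup>2 = m \<phi> A"
proof -
  obtain \<psi> where \<psi>: "\<psi> \<in> Hs A" "\<forall>\<eta>\<in>Hs A. inner (\<phi> - \<psi>) \<eta> = 0" "(norm \<psi>)\<^sup>2 = m \<phi> A"
    using exists_q[OF assms] by blast
  have "q A \<phi> = \<psi>" by (rule q_eqI[OF \<psi>(1,2)])
  thus "q A \<phi> \<in> Hs A" "\<forall>\<eta>\<in>Hs A. inner (\<phi> - q A \<phi>) \<eta> = 0" "(norm (q A \<phi>))\<^sup>2 = m \<phi> A"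
    using \<psi> by simp_all
qed

lemma q_fix: assumes "\<eta> \<in> Hs A" shows "q A \<eta> = \<eta>"
  by (rule q_eqI[OF assms]) simp

lemma q_proj: assumes A: "A \<subseteq> \<Omega>" shows "is_projection J (q A)"
proof (rule proj_intro)
  note c1 = q_char(1)[OF A] and c2 = q_char(2)[OF A]
  show "linear (q A)"
  proof (rule linearI)
    fix x y
    show "q A (x + y) = q A x + q A y"
    proof (rule q_eqI)
      show "q A x + q A y \<in> Hs A" by (rule Hs_add[OF c1 c1])
      show "\<forall>\<eta>\<in>Hs A. inner (x + y - (q A x + q A y)) \<eta> = 0"
      proof
        fix \<eta> assume "\<eta> \<in> Hs A"
        hence "inner (x - q A x) \<eta> = 0" "inner (y - q A y) \<eta> = 0" using c2 by blast+
        hence "inner ((x - q A x) + (y - q A y)) \<eta> = 0" by (simp add: inner_add_left)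
        thus "inner (x + y - (q A x + q A y)) \<eta> = 0" by (simp add: algebra_simps)
      qed
    qed
    fix c :: real
    show "q A (c *\<^sub>R x) = c *\<^sub>R q A x"
    proof (rule q_eqI)
      show "c *\<^sub>R q A x \<in> Hs A" by (rule Hs_scale[OF c1])
      show "\<forall>\<eta>\<in>Hs A. inner (c *\<^sub>R x - c *\<^sub>R q A x) \<eta> = 0"
      proof
        fix \<eta> assume "\<eta> \<in> Hs A"
        hence "inner (x - q A x) \<eta> = 0" using c2 by blast
        hence "inner (c *\<^sub>R (x - q A x)) \<eta> = 0" by simp
        thus "inner (c *\<^sub>R x - c *\<^sub>R q A x) \<eta> = 0" by (simp add: algebra_simps)
      qed
    qed
  qed
  have kx: "inner (q A x) y = inner (q A x) (q A y)" for x y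
  proof -
    have "inner (y - q A y) (q A x) = 0" using c2 c1 by blast
    hence "inner (q A x) (y - q A y) = 0" by (simp add: inner_commute)
    thus ?thesis by (simp add: inner_diff_right)
  qed
  show "inner (q A x) y = inner x (q A y)" for x y
    using kx[of x y] kx[of y x] by (simp add: inner_commute)
  show "inner (q A x) x = inner (q A x) (q A x)" for x by (rule kx)
  show "q A (J x) = J (q A x)" for x
  proof (rule q_eqI)
    show "J (q A x) \<in> Hs A" by (rule Hs_J[OF c1])
    have lJ: "linear J" using cs unfolding complex_structure_def by simp
    show "\<forall>\<eta>\<in>Hs A. inner (J x - J (q A x)) \<eta> = 0"
    proof
      fix \<eta> assume "\<eta> \<in> Hs A"
      hence "inner (x - q A x) (J \<eta>) = 0" using c2 Hs_J by blast
      moreover have "J x - J (q A x) = J (x - q A x)" by (simp add: linear_diff[OF lJ])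
      ultimately show "inner (J x - J (q A x)) \<eta> = 0" using cs_inner_J[OF cs] by simp
    qed
  qed
qed

lemma q_norm: "A \<subseteq> \<Omega> \<Longrightarrow> (norm (q A \<phi>))\<^sup>2 = m \<phi> A" using q_char(3) .

lemma range_q_Hs: assumes "A \<subseteq> \<Omega>" shows "range (q A) = Hs A"
  using q_char(1)[OF assms] q_fix by (metis image_subset_iff rangeI subsetI subset_antisym)

lemma range_q_m: assumes "A \<subseteq> \<Omega>" shows "range (q A) = {\<phi>. m \<phi> A = (norm \<phi>)\<^sup>2}"
proof -
  have P: "is_projection J (q A)" by (rule q_proj[OF assms])
  have "\<phi> \<in> range (q A) \<longleftrightarrow> q A \<phi> = \<phi>" for \<phi>
    using proj_idem[OF P] by (metis rangeE rangeI)
  also have "q A \<phi> = \<phi> \<longleftrightarrow> norm (q A \<phi>) = norm \<phi>" for \<phi> by (rule proj_fix_iff[OF P])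
  also have "norm (q A \<phi>) = norm \<phi> \<longleftrightarrow> (norm (q A \<phi>))\<^sup>2 = (norm \<phi>)\<^sup>2" for \<phi>
    by (simp add: power2_eq_iff_nonneg)
  finally show ?thesis using q_norm[OF assms] by auto
qed

end

context pv begin

interpretation A: algebra \<Omega> \<A> by (rule alg)

lemma q_agree: assumes "A \<in> \<A>" shows "q A = p A"
proof (rule proj_eqI)
  have As: "A \<subseteq> \<Omega>" using assms A.space_closed by blast
  show "is_projection J (q A)" by (rule q_proj[OF As])
  show "is_projection J (p A)" by (rule pvm_proj[OF pvm assms])
  fix x
  have "(norm (q A x))\<^sup>2 = (norm (p A x))\<^sup>2" using q_norm[OF As] m_agree[OF assms] by simp
  thus "norm (q A x) = norm (p A x)" by (simp add: power2_eq_iff_nonneg)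
qed

lemma q_empty: "q {} x = 0"
  using q_agree[OF A.empty_sets] pvm_empty[OF pvm A.empty_sets] by simp

lemma q_Omega: "q \<Omega> = id" using q_agree[OF A.top] p_Omega by simp

lemma m_add: assumes "A \<in> Msets \<Omega> \<A> p" "B \<in> Msets \<Omega> \<A> p" "A \<inter> B = {}"
  shows "m x (A \<union> B) = m x A + m x B"
proof -
  interpret finite_measure "N x" by (rule finite_N)
  have a: "A \<in> sets (N x)" "B \<in> sets (N x)" using assms(1,2) M_sub_MP sets_N by blast+
  interpret M: sigma_algebra \<Omega> "Msets \<Omega> \<A> p" by (rule sa_M)
  have "A \<union> B \<in> Msets \<Omega> \<A> p" using assms(1,2) by (rule M.Un)
  hence u: "A \<union> B \<in> MP x" using M_sub_MP by blast
  have "measure (N x) (A \<union> B) = measure (N x) A + measure (N x) B"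
    by (rule finite_measure_Union[OF a assms(3)])
  thus ?thesis using measure_N[OF u] measure_N a sets_N by simp
qed

lemma q_add: assumes "A \<in> Msets \<Omega> \<A> p" "B \<in> Msets \<Omega> \<A> p" "A \<inter> B = {}"
  shows "q (A \<union> B) x = q A x + q B x"
proof -
  have sub: "A \<subseteq> \<Omega>" "B \<subseteq> \<Omega>" "A \<union> B \<subseteq> \<Omega>" using assms M_sub by auto
  note P1 = q_proj[OF sub(3)] and P2 = q_proj[OF sub(1)] and P3 = q_proj[OF sub(2)]
  define T where "T y = q (A \<union> B) y - q A y - q B y" for y
  have lin: "linear T" unfolding T_def
    by (intro linear_compose_sub proj_lin[OF P1] proj_lin[OF P2] proj_lin[OF P3])
  have "T x = 0"
  proof (rule sym_zero[OF lin])
    show "inner (T y) z = inner y (T z)" for y z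
      unfolding T_def using proj_sym[OF P1] proj_sym[OF P2] proj_sym[OF P3]
      by (simp add: inner_diff_left inner_diff_right)
    show "inner (T y) y = 0" for y
    proof -
      have "inner (T y) y = (norm (q (A \<union> B) y))\<^sup>2 - (norm (q A y))\<^sup>2 - (norm (q B y))\<^sup>2"
        unfolding T_def using proj_inner_self[OF P1] proj_inner_self[OF P2] proj_inner_self[OF P3]
        by (simp add: inner_diff_left)
      also have "\<dots> = m y (A \<union> B) - m y A - m y B"
        using q_norm[OF sub(1)] q_norm[OF sub(2)] q_norm[OF sub(3)] by simp
      also have "\<dots> = 0" using m_add[OF assms] by simp
      finally show ?thesis .
    qed
  qed
  thus ?thesis unfolding T_def by (simp add: algebra_simps)
qed

lemma q_sums:
  fixes F :: "nat \<Rightarrow> 'b set"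
  assumes F: "range F \<subseteq> Msets \<Omega> \<A> p" "disjoint_family F"
  shows "(\<lambda>i. q (F i) x) sums q (\<Union>i. F i) x"
proof -
  interpret M: sigma_algebra \<Omega> "Msets \<Omega> \<A> p" by (rule sa_M)
  define S where "S n = (\<Union>i\<in>{..<n}. F i)" for n
  have SM: "S n \<in> Msets \<Omega> \<A> p" for n unfolding S_def using F(1) by (intro M.finite_UN) auto
  have UM: "(\<Union>i. F i) \<in> Msets \<Omega> \<A> p" using F(1) by (rule M.countable_UN)
  have psum: "(\<Sum>i<n. q (F i) x) = q (S n) x" for n
  proof (induct n)
    case 0 thus ?case by (simp add: S_def q_empty)
  next
    case (Suc n)
    have "S (Suc n) = S n \<union> F n" unfolding S_def by (simp add: lessThan_Suc Un_commute)
    moreover have "S n \<inter> F n = {}"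
    proof -
      have "F i \<inter> F n = {}" if "i < n" for i using F(2) that unfolding disjoint_family_on_def by simp
      thus ?thesis unfolding S_def by blast
    qed
    moreover have "F n \<in> Msets \<Omega> \<A> p" using F(1) by blast
    ultimately have "q (S (Suc n)) x = q (S n) x + q (F n) x"
      using q_add[OF SM[of n], of "F n" x] by simp
    thus ?case using Suc by simp
  qed
  have SU: "S n \<subseteq> (\<Union>i. F i)" for n unfolding S_def by blast
  have diff: "(norm (q (\<Union>i. F i) x - q (S n) x))\<^sup>2 = m x (\<Union>i. F i) - m x (S n)" for n
  proof -
    define R where "R = (\<Union>i. F i) - S n"
    have RM: "R \<in> Msets \<Omega> \<A> p" unfolding R_def using UM SM by (rule M.Diff)
    have eq: "(\<Union>i. F i) = S n \<union> R" "S n \<inter> R = {}" unfolding R_def using SU[of n] by auto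
    have "q (\<Union>i. F i) x = q (S n) x + q R x" using q_add[OF SM RM eq(2)] eq(1) by simp
    hence "(norm (q (\<Union>i. F i) x - q (S n) x))\<^sup>2 = m x R" using q_norm[OF M_sub[OF RM]] by simp
    also have "\<dots> = m x (\<Union>i. F i) - m x (S n)" using m_add[OF SM RM eq(2)] eq(1) by simp
    finally show ?thesis .
  qed
  have lim: "(\<lambda>n. m x (S n)) \<longlonglongrightarrow> m x (\<Union>i. F i)"
  proof -
    interpret finite_measure "N x" by (rule finite_N)
    have r: "range S \<subseteq> sets (N x)" using SM M_sub_MP sets_N by blast
    have inc: "incseq S" unfolding S_def incseq_def by (auto intro: order.strict_trans2)
    have US: "(\<Union>n. S n) = (\<Union>i. F i)" unfolding S_def by auto
    from finite_Lim_measure_incseq[OF r inc]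
    have "(\<lambda>n. measure (N x) (S n)) \<longlonglongrightarrow> measure (N x) (\<Union>i. F i)" unfolding US .
    moreover have "measure (N x) (S n) = m x (S n)" for n using SM M_sub_MP measure_N by blast
    moreover have "measure (N x) (\<Union>i. F i) = m x (\<Union>i. F i)" using UM M_sub_MP measure_N by blast
    ultimately show ?thesis by simp
  qed
  have "(\<lambda>n. (norm (q (\<Union>i. F i) x - q (S n) x))\<^sup>2) \<longlonglongrightarrow> m x (\<Union>i. F i) - m x (\<Union>i. F i)"
    unfolding diff by (intro tendsto_diff tendsto_const lim)
  hence "(\<lambda>n. sqrt ((norm (q (\<Union>i. F i) x - q (S n) x))\<^sup>2)) \<longlonglongrightarrow> sqrt 0"
    by (intro tendsto_real_sqrt) simp
  hence "(\<lambda>n. norm (q (\<Union>i. F i) x - q (S n) x)) \<longlonglongrightarrow> 0" by simp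
  hence "(\<lambda>n. q (\<Union>i. F i) x - q (S n) x) \<longlonglongrightarrow> 0" by (rule tendsto_norm_zero_cancel)
  hence "(\<lambda>n. q (\<Union>i. F i) x - (q (\<Union>i. F i) x - q (S n) x)) \<longlonglongrightarrow> q (\<Union>i. F i) x - 0"
    by (intro tendsto_diff tendsto_const)
  hence "(\<lambda>n. q (S n) x) \<longlonglongrightarrow> q (\<Union>i. F i) x" by simp
  thus ?thesis unfolding sums_def psum .
qed

lemma q_pvm: "is_pvm J \<Omega> (Msets \<Omega> \<A> p) q"
  unfolding is_pvm_def
proof (intro conjI ballI allI impI)
  show "is_projection J (q A)" if "A \<in> Msets \<Omega> \<A> p" for A using q_proj M_sub that by blast
  show "q \<Omega> = id" by (rule q_Omega)
  show "(\<lambda>i. q (F i) x) sums q (\<Union>i. F i) x"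
    if "range F \<subseteq> Msets \<Omega> \<A> p" "disjoint_family F" for F :: "nat \<Rightarrow> 'b set" and x
    using q_sums that by blast
qed

lemma q_unique:
  assumes r: "is_pvm J \<Omega> (sigma_sets \<Omega> \<A>) r" "\<forall>A\<in>\<A>. r A = p A" and A: "A \<in> sigma_sets \<Omega> \<A>"
  shows "r A = q A"
proof -
  let ?S = "sigma_sets \<Omega> \<A>"
  have sa: "sigma_algebra \<Omega> ?S" by (rule sigma_algebra_sigma_sets[OF A.space_closed])
  have alS: "algebra \<Omega> ?S" using sa by (simp add: sigma_algebra_def)
  have As: "A \<subseteq> \<Omega>" using sigma_sub_M A M_sub by blast
  have norms: "ennreal ((norm (r A x))\<^sup>2) = MS x A" for x
  proof -
    define R where "R = measure_of \<Omega> ?S (\<lambda>X. ennreal ((norm (r X x))\<^sup>2))"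
    define N' where "N' = measure_of \<Omega> ?S (MS x)"
    have msN: "measure_space \<Omega> ?S (MS x)"
      by (rule measure_down[OF ms sa]) (use sigma_sub_M M_sub_MP in blast)
    have eR: "emeasure R X = ennreal ((norm (r X x))\<^sup>2)" if "X \<in> ?S" for X
      unfolding R_def using sa pvm_pos[OF r(1) alS] pvm_ca[OF r(1) alS] that
      by (rule emeasure_measure_of_sigma)
    have eN: "emeasure N' X = MS x X" if "X \<in> ?S" for X
      unfolding N'_def using sa msN that unfolding measure_space_def
      by (intro emeasure_measure_of_sigma) auto
    have "R = N'"
    proof (rule measure_eqI_generator_eq[where E = \<A> and \<Omega> = \<Omega> and A = "\<lambda>_. \<Omega>"])
      show "Int_stable \<A>" unfolding Int_stable_def using A.Int by blast
      show "\<A> \<subseteq> Pow \<Omega>" by (rule A.space_closed)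
      show "emeasure R X = emeasure N' X" if "X \<in> \<A>" for X
      proof -
        have X: "X \<in> ?S" using that by (rule sigma_sets.Basic)
        show ?thesis using eR[OF X] eN[OF X] agree[OF that] r(2) that by simp
      qed
      show "sets R = ?S" unfolding R_def by (rule sigma_algebra.sets_measure_of_eq[OF sa])
      show "sets N' = ?S" unfolding N'_def by (rule sigma_algebra.sets_measure_of_eq[OF sa])
      show "range (\<lambda>_. \<Omega>) \<subseteq> \<A>" using A.top by blast
      show "(\<Union>i::nat. \<Omega>) = \<Omega>" by simp
      show "emeasure R \<Omega> \<noteq> \<infinity>" for i :: nat
        using eR[OF sigma_sets_top] by simp
    qed
    thus ?thesis using eR[OF A] eN[OF A] by simp
  qed
  show ?thesis
  proof (rule proj_eqI)
    show "is_projection J (r A)" by (rule pvm_proj[OF r(1) A])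
    show "is_projection J (q A)" by (rule q_proj[OF As])
    fix x
    have "ennreal ((norm (r A x))\<^sup>2) = ennreal ((norm (q A x))\<^sup>2)"
      using norms[of x] MS_m[OF As] q_norm[OF As] by simp
    hence "(norm (r A x))\<^sup>2 = (norm (q A x))\<^sup>2" by simp
    thus "norm (r A x) = norm (q A x)" by (simp add: power2_eq_iff_nonneg)
  qed
qed

end

lemma ennreal_eq_real: "0 \<le> a \<Longrightarrow> 0 \<le> b \<Longrightarrow> ennreal a = ennreal b \<longleftrightarrow> a = b"
  by simp

theorem theorem5:
  fixes J :: "'a::{real_inner, complete_space} \<Rightarrow> 'a"
    and \<Omega> :: "'b set" and \<A> :: "'b set set" and p :: "'b set \<Rightarrow> 'a \<Rightarrow> 'a"
  assumes "complex_structure J"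
    and "algebra \<Omega> \<A>"
    and "is_pvm J \<Omega> \<A> p"
  shows "\<exists>q. is_pvm J \<Omega> (Msets \<Omega> \<A> p) q
           \<and> (\<forall>A\<in>\<A>. q A = p A)
           \<and> (\<forall>\<phi>. \<forall>A\<in>Msets \<Omega> \<A> p. ennreal ((norm (q A \<phi>))\<^sup>2) = Mstar \<A> p \<phi> A)
           \<and> (\<forall>A\<in>Msets \<Omega> \<A> p.
                range (q A) = {\<phi>. Mstar \<A> p \<phi> A = ennreal ((norm \<phi>)\<^sup>2)}
              \<and> range (q A) = \<Inter>{range (q B) | B. B \<in> sigma_unions \<A> \<and> A \<subseteq> B})
           \<and> (\<forall>r. is_pvm J \<Omega> (sigma_sets \<Omega> \<A>) r \<and> (\<forall>A\<in>\<A>. r A = p A)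
                   \<longrightarrow> (\<forall>A\<in>sigma_sets \<Omega> \<A>. r A = q A))"
proof -
  interpret pv J \<Omega> \<A> p by (rule pv.intro[OF assms])
  have c1: "is_pvm J \<Omega> (Msets \<Omega> \<A> p) q" by (rule q_pvm)
  have c2: "\<forall>A\<in>\<A>. q A = p A" using q_agree by blast
  have c3: "\<forall>\<phi>. \<forall>A\<in>Msets \<Omega> \<A> p. ennreal ((norm (q A \<phi>))\<^sup>2) = Mstar \<A> p \<phi> A"
  proof (intro allI ballI)
    fix \<phi> A assume "A \<in> Msets \<Omega> \<A> p"
    hence As: "A \<subseteq> \<Omega>" by (rule M_sub)
    show "ennreal ((norm (q A \<phi>))\<^sup>2) = Mstar \<A> p \<phi> A" using q_norm[OF As] MS_m[OF As] by simp
  qed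
  have rq: "range (q A) = {\<phi>. Mstar \<A> p \<phi> A = ennreal ((norm \<phi>)\<^sup>2)}" if As: "A \<subseteq> \<Omega>" for A
  proof -
    have "m \<phi> A = (norm \<phi>)\<^sup>2 \<longleftrightarrow> Mstar \<A> p \<phi> A = ennreal ((norm \<phi>)\<^sup>2)" for \<phi>
      unfolding MS_m[OF As] using ennreal_eq_real[OF m_nonneg zero_le_power2] by simp
    thus ?thesis unfolding range_q_m[OF As] by blast
  qed
  have rB: "range (q B) = {\<phi>. PB B \<phi> = \<phi>}" if "B \<in> sigma_unions \<A>" for B
    using range_q_m[OF sU_sub[OF that]] PB_fix_iff[OF that] by blast
  have c4: "\<forall>A\<in>Msets \<Omega> \<A> p.
                range (q A) = {\<phi>. Mstar \<A> p \<phi> A = ennreal ((norm \<phi>)\<^sup>2)}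
              \<and> range (q A) = \<Inter>{range (q B) | B. B \<in> sigma_unions \<A> \<and> A \<subseteq> B}"
  proof
    fix A assume "A \<in> Msets \<Omega> \<A> p"
    hence As: "A \<subseteq> \<Omega>" by (rule M_sub)
    have "{range (q B) | B. B \<in> sigma_unions \<A> \<and> A \<subseteq> B} = {{\<phi>. PB B \<phi> = \<phi>} | B. B \<in> sigma_unions \<A> \<and> A \<subseteq> B}"
      using rB by blast
    hence "range (q A) = \<Inter>{range (q B) | B. B \<in> sigma_unions \<A> \<and> A \<subseteq> B}"
      unfolding range_q_Hs[OF As] Hs_def by simp
    thus "range (q A) = {\<phi>. Mstar \<A> p \<phi> A = ennreal ((norm \<phi>)\<^sup>2)}
              \<and> range (q A) = \<Inter>{range (q B) | B. B \<in> sigma_unions \<A> \<and> A \<subseteq> B}"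
      using rq[OF As] by blast
  qed
  have c5: "\<forall>r. is_pvm J \<Omega> (sigma_sets \<Omega> \<A>) r \<and> (\<forall>A\<in>\<A>. r A = p A)
                   \<longrightarrow> (\<forall>A\<in>sigma_sets \<Omega> \<A>. r A = q A)"
    using q_unique by blast
  show ?thesis using c1 c2 c3 c4 c5 by blast
qed

end
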